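(* For every $n\ge1$, the itinerary map $\iota$ is a well-defined map $\mathcal{T}_n\to\mathcal{U}_n$, and it is injective.
   Context: $\Gamma=\{0,1,2,3\}$. A word $w$ is primitive if it is not $v^m$ with $v$ nonempty and $m\ge2$; $\mathcal{U}_n$ is the set of primitive words $w\in\Gamma^n$ with $w\notin\{1,2\}^n$. $C=\{(a,b,c)\in\mathbb{R}^3: a\ge b\ge c>0,\ a+b+c=1\}$, $C^*=\{(a,b,c)\in C: a\ne1/2\}$. Regions of $C^*$: $R_0=\{a<1/2\}$, $R_1=\{2a-1\ge2b,\ a>1/2\}$, $R_2=\{2b>2a-1\ge2c,\ a>1/2\}$, $R_3=\{2c>2a-1,\ a>1/2\}$. Sorted pedal map $P:C^*\to C$: $P(a,b,c)=(1-2c,1-2b,1-2a)$ on $R_0$, $(2a-1,2b,2c)$ on $R_1$, $(2b,2a-1,2c)$ on $R_2$, $(2b,2c,2a-1)$ on $R_3$. $\mathcal{T}_n=\{p\in C: P^j(p)\text{ defined for }0\le j<n,\ P^n(p)=p,\ P^d(p)\ne p\text{ for }1\le d<n\}$. The itinerary $\iota(p)=w_0\cdots w_{n-1}\in\Gamma^n$ of $p\in\mathcal{T}_n$ is defined by $P^j(p)\in R_{w_j}$ for $0\le j<n$. *)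

theory Defs
  imports Complex_Main
begin

definition primitive :: "nat list \<Rightarrow> bool" where
  "primitive w \<longleftrightarrow> \<not> (\<exists>v m. v \<noteq> [] \<and> m \<ge> 2 \<and> w = concat (replicate m v))"

definition Uset :: "nat \<Rightarrow> nat list set" where
  "Uset n = {w. length w = n \<and> set w \<subseteq> {0,1,2,3} \<and> primitive w \<and> \<not> set w \<subseteq> {1,2}}"

definition Cset :: "(real \<times> real \<times> real) set" where
  "Cset = {(a,b,c). a \<ge> b \<and> b \<ge> c \<and> c > 0 \<and> a + b + c = 1}"

definition Cstar :: "(real \<times> real \<times> real) set" where
  "Cstar = {(a,b,c). (a,b,c) \<in> Cset \<and> a \<noteq> 1/2}"

definition Region :: "nat \<Rightarrow> (real \<times> real \<times> real) set" where
  "Region k = {(a,b,c). (a,b,c) \<in> Cstar \<and>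
      ((k = 0 \<and> a < 1/2) \<or>
       (k = 1 \<and> 2*a - 1 \<ge> 2*b \<and> a > 1/2) \<or>
       (k = 2 \<and> 2*b > 2*a - 1 \<and> 2*a - 1 \<ge> 2*c \<and> a > 1/2) \<or>
       (k = 3 \<and> 2*c > 2*a - 1 \<and> a > 1/2))}"

text \<open>Sorted pedal map; only its values on Cstar are meaningful.\<close>
definition pedal :: "real \<times> real \<times> real \<Rightarrow> real \<times> real \<times> real" where
  "pedal = (\<lambda>(a,b,c).
     if a < 1/2 then (1 - 2*c, 1 - 2*b, 1 - 2*a)
     else if 2*a - 1 \<ge> 2*b then (2*a - 1, 2*b, 2*c)
     else if 2*a - 1 \<ge> 2*c then (2*b, 2*a - 1, 2*c)
     else (2*b, 2*c, 2*a - 1))"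

definition Tset :: "nat \<Rightarrow> (real \<times> real \<times> real) set" where
  "Tset n = {p. p \<in> Cset \<and> (\<forall>j<n. (pedal ^^ j) p \<in> Cstar) \<and> (pedal ^^ n) p = p
              \<and> (\<forall>d. 1 \<le> d \<and> d < n \<longrightarrow> (pedal ^^ d) p \<noteq> p)}"

definition itinerary :: "nat \<Rightarrow> real \<times> real \<times> real \<Rightarrow> nat list" where
  "itinerary n p = (THE w. length w = n \<and> (\<forall>j<n. (pedal ^^ j) p \<in> Region (w ! j)))"

end

theory Submission
  imports Defs
begin

definition Dst :: "real \<times> real \<times> real \<Rightarrow> real \<times> real \<times> real \<Rightarrow> real" where
  "Dst x y = (case x of (a,b,c) \<Rightarrow> case y of (a',b',c') \<Rightarrow> \<bar>a-a'\<bar> + \<bar>b-b'\<bar> + \<bar>c-c'\<bar>)"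

lemma Dst_nonneg: "Dst x y \<ge> 0"
  by (cases x; cases y) (auto simp: Dst_def)

lemma Dst_zero: "Dst x y = 0 \<Longrightarrow> x = y"
  by (cases x; cases y) (auto simp: Dst_def)

lemma region_le3: "x \<in> Region k \<Longrightarrow> k \<le> 3"
  by (cases x) (auto simp: Region_def)

lemma region_Cstar: "x \<in> Region k \<Longrightarrow> x \<in> Cstar"
  by (cases x) (auto simp: Region_def)

lemma region_disj: "x \<in> Region k \<Longrightarrow> x \<in> Region l \<Longrightarrow> k = l"
  by (cases x) (auto simp: Region_def Cstar_def Cset_def)

lemma region_cover: "x \<in> Cstar \<Longrightarrow> \<exists>k. x \<in> Region k"
proof -
  assume h: "x \<in> Cstar"
  obtain a b c where x: "x = (a,b,c)" by (cases x) auto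
  from h x have C: "a \<ge> b" "b \<ge> c" "c > 0" "a + b + c = 1" "a \<noteq> 1/2"
    by (auto simp: Cstar_def Cset_def)
  show ?thesis
  proof (cases "a < 1/2")
    case True then have "x \<in> Region 0" using h x by (auto simp: Region_def)
    then show ?thesis by blast
  next
    case False
    then have a: "a > 1/2" using C by auto
    show ?thesis
    proof (cases "2*a - 1 \<ge> 2*b")
      case True then have "x \<in> Region 1" using h x a by (auto simp: Region_def)
      then show ?thesis by blast
    next
      case F2: False
      show ?thesis
      proof (cases "2*a - 1 \<ge> 2*c")
        case True then have "x \<in> Region 2" using h x a F2 by (auto simp: Region_def)
        then show ?thesis by blast
      next
        case False then have "x \<in> Region 3" using h x a F2 by (auto simp: Region_def)
        then show ?thesis by blast
      qed
    qed
  qed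
qed

lemma m: "\<bar>2*u - 2*u'\<bar> = 2 * \<bar>u - u'\<bar>" "\<bar>2*u - 1 - (2*u' - 1)\<bar> = 2 * \<bar>u - u'\<bar>"
     "\<bar>1 - 2*u - (1 - 2*u')\<bar> = 2 * \<bar>u - u'\<bar>" for u u' :: real by (simp_all add: abs_if)
lemma Dst_pedal: "x \<in> Region k \<Longrightarrow> y \<in> Region k \<Longrightarrow> Dst (pedal x) (pedal y) = 2 * Dst x y"
proof -
  assume x: "x \<in> Region k" and y: "y \<in> Region k"
  obtain a b c where xe: "x = (a,b,c)" by (cases x) auto
  obtain a' b' c' where ye: "y = (a',b',c')" by (cases y) auto
  have X: "(a,b,c) \<in> Region k" "(a',b',c') \<in> Region k" using x y xe ye by auto
  have ik: "k = 0 \<or> k = 1 \<or> k = 2 \<or> k = 3" using X(1) by (auto simp: Region_def)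
  have cb: "c \<le> b" "c' \<le> b'" using X by (simp_all add: Region_def Cstar_def Cset_def)
  from ik show ?thesis
  proof (elim disjE)
    assume "k = 0" then have "a < 1/2" "a' < 1/2" using X by (simp_all add: Region_def)
    then have "pedal x = (1 - 2*c, 1 - 2*b, 1 - 2*a)" "pedal y = (1 - 2*c', 1 - 2*b', 1 - 2*a')"
      using xe ye by (simp_all add: pedal_def)
    then show ?thesis using xe ye by (simp add: Dst_def m abs_minus_commute)
  next
    assume "k = 1" then have "\<not> a < 1/2" "\<not> a' < 1/2" "2*a-1 \<ge> 2*b" "2*a'-1 \<ge> 2*b'" using X by (simp_all add: Region_def)
    then have "pedal x = (2*a - 1, 2*b, 2*c)" "pedal y = (2*a' - 1, 2*b', 2*c')"
      using xe ye by (simp_all add: pedal_def)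
    then show ?thesis using xe ye by (simp add: Dst_def m)
  next
    assume "k = 2" then have "\<not> a < 1/2" "\<not> a' < 1/2" "\<not> 2*a-1 \<ge> 2*b" "\<not> 2*a'-1 \<ge> 2*b'" "2*a-1 \<ge> 2*c" "2*a'-1 \<ge> 2*c'" using X by (simp_all add: Region_def)
    then have "pedal x = (2*b, 2*a - 1, 2*c)" "pedal y = (2*b', 2*a' - 1, 2*c')"
      using xe ye by (simp_all add: pedal_def)
    then show ?thesis using xe ye by (simp add: Dst_def m)
  next
    assume "k = 3" then have "\<not> a < 1/2" "\<not> a' < 1/2" "\<not> 2*a-1 \<ge> 2*c" "\<not> 2*a'-1 \<ge> 2*c'" using X by (simp_all add: Region_def)
    moreover have "\<not> 2*a-1 \<ge> 2*b" "\<not> 2*a'-1 \<ge> 2*b'" using calculation cb by linarith+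
    ultimately have "pedal x = (2*b, 2*c, 2*a - 1)" "pedal y = (2*b', 2*c', 2*a' - 1)"
      using xe ye by (simp_all add: pedal_def)
    then show ?thesis using xe ye by (simp add: Dst_def m)
  qed
qed

lemma Dst_iter:
  "(\<forall>j<m. \<exists>k. (pedal ^^ j) p \<in> Region k \<and> (pedal ^^ j) q \<in> Region k) \<Longrightarrow>
   Dst ((pedal ^^ m) p) ((pedal ^^ m) q) = 2 ^ m * Dst p q"
proof (induction m)
  case 0 then show ?case by simp
next
  case (Suc m)
  then obtain k where "(pedal ^^ m) p \<in> Region k" "(pedal ^^ m) q \<in> Region k" by blast
  then have "Dst ((pedal ^^ Suc m) p) ((pedal ^^ Suc m) q) = 2 * Dst ((pedal ^^ m) p) ((pedal ^^ m) q)"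
    using Dst_pedal by simp
  then show ?case using Suc by simp
qed

lemma itin_eq:
  assumes "n \<ge> 1" "(pedal ^^ n) p = p" "(pedal ^^ n) q = q"
    "\<forall>j<n. \<exists>k. (pedal ^^ j) p \<in> Region k \<and> (pedal ^^ j) q \<in> Region k"
  shows "p = q"
proof -
  have "Dst p q = 2 ^ n * Dst p q" using Dst_iter[OF assms(4)] assms(2,3) by simp
  moreover have "(2::real) ^ n \<ge> 2" using assms(1)
    by (metis power_increasing power_one_right one_le_numeral)
  ultimately have "(2 ^ n - 1) * Dst p q = 0" by (simp add: algebra_simps)
  then have "Dst p q = 0" using \<open>(2::real) ^ n \<ge> 2\<close> by simp
  then show ?thesis by (rule Dst_zero)
qed

lemma nth_concat_rep:
  "i < m * length v \<Longrightarrow> concat (replicate m v) ! i = v ! (i mod length v)"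
proof (induction m arbitrary: i)
  case 0 then show ?case by simp
next
  case (Suc m)
  show ?case
  proof (cases "i < length v")
    case True then show ?thesis by (simp add: nth_append)
  next
    case False
    then have "concat (replicate (Suc m) v) ! i = concat (replicate m v) ! (i - length v)"
      by (simp add: nth_append)
    also have "\<dots> = v ! ((i - length v) mod length v)" using Suc False by auto
    also have "(i - length v) mod length v = i mod length v" using False
      by (simp add: le_mod_geq)
    finally show ?thesis .
  qed
qed

lemma funpow_mod:
  assumes "(pedal ^^ n) p = p"
  shows "(pedal ^^ j) p = (pedal ^^ (j mod n)) p"
proof -
  have "\<And>t. (pedal ^^ (t * n)) p = p"
  proof -
    fix t show "(pedal ^^ (t * n)) p = p"
      by (induction t) (simp_all add: funpow_add assms)
  qed
  have "j = (j mod n) + (j div n) * n" by simp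
  then have "(pedal ^^ j) p = (pedal ^^ (j mod n)) ((pedal ^^ ((j div n) * n)) p)"
    by (metis funpow_add comp_apply)
  then show ?thesis using \<open>\<And>t. (pedal ^^ (t * n)) p = p\<close> by simp
qed

lemma third_double:
  assumes "\<forall>j<n. \<exists>k\<in>{1,2}. (pedal ^^ j) p \<in> Region k" "m \<le> n"
  shows "snd (snd ((pedal ^^ m) p)) = 2 ^ m * snd (snd p)"
  using assms(2)
proof (induction m)
  case 0 then show ?case by simp
next
  case (Suc m)
  have "m < n" using Suc.prems by simp
  then obtain k where k: "k \<in> {1,2}" "(pedal ^^ m) p \<in> Region k" using assms(1) by blast
  obtain a b c where e: "(pedal ^^ m) p = (a,b,c)" by (cases "(pedal ^^ m) p") auto
  have "snd (snd (pedal (a,b,c))) = 2 * c" using k e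
    by (auto simp: Region_def pedal_def)
  then show ?case using Suc e by simp
qed

theorem mainTheorem8:
  fixes n :: nat
  assumes "n \<ge> 1"
  shows "(\<forall>p \<in> Tset n.
            (\<exists>!w. length w = n \<and> (\<forall>j<n. (pedal ^^ j) p \<in> Region (w ! j)))
            \<and> itinerary n p \<in> Uset n)
         \<and> inj_on (itinerary n) (Tset n)"
proof -
  have EU: "\<exists>!w. length w = n \<and> (\<forall>j<n. (pedal ^^ j) p \<in> Region (w ! j))" if p: "p \<in> Tset n" for p
  proof (rule ex_ex1I)
    define w where "w = map (\<lambda>j. SOME k. (pedal ^^ j) p \<in> Region k) [0..<n]"
    have "\<forall>j<n. (pedal ^^ j) p \<in> Region (w ! j)"
    proof (intro allI impI)
      fix j assume j: "j < n"
      then have "(pedal ^^ j) p \<in> Cstar" using p by (auto simp: Tset_def)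
      then have "\<exists>k. (pedal ^^ j) p \<in> Region k" by (rule region_cover)
      then have "(pedal ^^ j) p \<in> Region (SOME k. (pedal ^^ j) p \<in> Region k)" by (rule someI_ex)
      then show "(pedal ^^ j) p \<in> Region (w ! j)" using j unfolding w_def by simp
    qed
    then show "\<exists>w. length w = n \<and> (\<forall>j<n. (pedal ^^ j) p \<in> Region (w ! j))"
      by (intro exI[of _ w]) (simp add: w_def)
  next
    fix w y assume "length w = n \<and> (\<forall>j<n. (pedal ^^ j) p \<in> Region (w ! j))"
      "length y = n \<and> (\<forall>j<n. (pedal ^^ j) p \<in> Region (y ! j))"
    then show "w = y" by (intro nth_equalityI) (auto intro: region_disj)
  qed
  have IT: "length (itinerary n p) = n \<and> (\<forall>j<n. (pedal ^^ j) p \<in> Region (itinerary n p ! j))"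
    if p: "p \<in> Tset n" for p
    unfolding itinerary_def using theI'[OF EU[OF p]] .
  have INJ: "inj_on (itinerary n) (Tset n)"
  proof (rule inj_onI)
    fix p q assume p: "p \<in> Tset n" and q: "q \<in> Tset n" and e: "itinerary n p = itinerary n q"
    show "p = q"
    proof (rule itin_eq[OF assms])
      show "(pedal ^^ n) p = p" "(pedal ^^ n) q = q" using p q by (auto simp: Tset_def)
      show "\<forall>j<n. \<exists>k. (pedal ^^ j) p \<in> Region k \<and> (pedal ^^ j) q \<in> Region k"
      proof (intro allI impI)
        fix j assume "j < n"
        then show "\<exists>k. (pedal ^^ j) p \<in> Region k \<and> (pedal ^^ j) q \<in> Region k"
          using IT[OF p] IT[OF q] e by auto
      qed
    qed
  qed
  have U: "itinerary n p \<in> Uset n" if p: "p \<in> Tset n" for p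
  proof -
    define w where "w = itinerary n p"
    have len: "length w = n" and R: "\<forall>j<n. (pedal ^^ j) p \<in> Region (w ! j)"
      using IT[OF p] by (auto simp: w_def)
    have per: "(pedal ^^ n) p = p" and np: "\<forall>d. 1 \<le> d \<and> d < n \<longrightarrow> (pedal ^^ d) p \<noteq> p"
      and pC: "p \<in> Cset" using p by (auto simp: Tset_def)
    have S: "set w \<subseteq> {0,1,2,3}"
    proof
      fix x assume "x \<in> set w"
      then obtain j where "j < n" "x = w ! j" using len by (auto simp: in_set_conv_nth)
      then have "x \<le> 3" using R region_le3 by blast
      then show "x \<in> {0,1,2,3}" by auto
    qed
    have N12: "\<not> set w \<subseteq> {1,2}"
    proof
      assume h: "set w \<subseteq> {1,2}"
      have "\<forall>j<n. \<exists>k\<in>{1,2}. (pedal ^^ j) p \<in> Region k"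
      proof (intro allI impI)
        fix j assume "j < n"
        then have "w ! j \<in> {1,2}" using h len nth_mem by blast
        then show "\<exists>k\<in>{1,2}. (pedal ^^ j) p \<in> Region k" using R \<open>j < n\<close> by blast
      qed
      from third_double[OF this order_refl] per
      have eq: "snd (snd p) = 2 ^ n * snd (snd p)" by simp
      have pos: "snd (snd p) > 0" using pC by (auto simp: Cset_def)
      have "(2::real) ^ n \<ge> 2" using assms
        by (metis power_increasing power_one_right one_le_numeral)
      moreover have "(2 ^ n - 1) * snd (snd p) = 0" using eq by (simp add: algebra_simps)
      ultimately show False using pos by simp
    qed
    have PR: "primitive w"
      unfolding primitive_def
    proof
      assume "\<exists>v m. v \<noteq> [] \<and> m \<ge> 2 \<and> w = concat (replicate m v)"
      then obtain v m where v: "v \<noteq> []" "m \<ge> 2" "w = concat (replicate m v)" by blast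
      define d where "d = length v"
      have nd: "n = m * d" using len v by (simp add: d_def length_concat sum_list_replicate)
      have d1: "1 \<le> d" using v d_def by (cases v) auto
      have "2 * d \<le> m * d" using v(2) by simp
      then have dn: "d < n" using nd d1 by linarith
      have ddvd: "d dvd n" using nd by simp
      have Rall: "(pedal ^^ j) p \<in> Region (v ! (j mod d))" for j
      proof -
        have "j mod n < n" using assms by simp
        then have "(pedal ^^ (j mod n)) p \<in> Region (w ! (j mod n))" using R by blast
        moreover have "w ! (j mod n) = v ! ((j mod n) mod d)"
          using v(3) nth_concat_rep[of "j mod n" m v] \<open>j mod n < n\<close> nd d_def by simp
        moreover have "(j mod n) mod d = j mod d" using ddvd by (simp add: mod_mod_cancel)
        ultimately show ?thesis using funpow_mod[OF per, of j] by simp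
      qed
      define q where "q = (pedal ^^ d) p"
      have qper: "(pedal ^^ n) q = q"
      proof -
        have "(pedal ^^ n) ((pedal ^^ d) p) = (pedal ^^ (n + d)) p" by (simp add: funpow_add)
        also have "\<dots> = (pedal ^^ (d + n)) p" by (simp add: add.commute)
        also have "\<dots> = (pedal ^^ d) ((pedal ^^ n) p)" by (simp add: funpow_add)
        finally show ?thesis unfolding q_def using per by simp
      qed
      have "q = p"
      proof (rule itin_eq[OF assms qper per])
        show "\<forall>j<n. \<exists>k. (pedal ^^ j) q \<in> Region k \<and> (pedal ^^ j) p \<in> Region k"
        proof (intro allI impI exI conjI)
          fix j
          have "(pedal ^^ j) q = (pedal ^^ (j + d)) p" unfolding q_def by (simp add: funpow_add)
          moreover have "(j + d) mod d = j mod d" by simp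
          ultimately show "(pedal ^^ j) q \<in> Region (v ! (j mod d))" using Rall[of "j+d"] by simp
          show "(pedal ^^ j) p \<in> Region (v ! (j mod d))" by (rule Rall)
        qed
      qed
      moreover have "(pedal ^^ d) p \<noteq> p" using np d1 dn by blast
      ultimately show False unfolding q_def by simp
    qed
    show ?thesis using len S N12 PR by (simp add: Uset_def w_def)
  qed
  show ?thesis using EU U INJ by blast
qed

end
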